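(* Let $G$ be a finite group and $R,R'$ orthogonal $G$-representations. Then, in the lattice of $G$-weak indexing systems, $\underline{\mathbb F}^{R}\vee\underline{\mathbb F}^{R'}=\underline{\mathbb F}^{R\oplus R'}$.
   Context: For $H\le G$, $\mathbb F_H$ is the category of finite $H$-sets, $*_H$ the one-point $H$-set. A $G$-weak indexing system is an assignment $H\mapsto\mathcal C_H$ of isomorphism-closed classes of finite $H$-sets, stable under restriction to subgroups and conjugation, such that $\mathcal C_H\neq\emptyset$ implies $*_H\in\mathcal C_H$, and closed under self-indexed coproducts: if $S\in\mathcal C_H$ and for each orbit $[H/K]\subseteq S$ (with chosen point) a $K$-set $T\in\mathcal C_K$ is given, then $\coprod\mathrm{Ind}_K^HT\in\mathcal C_H$. These form a lattice under inclusion, $\vee$ denoting the join. For an orthogonal $G$-representation $R$, $\underline{\mathbb F}^R$ is the $G$-weak indexing system $\mathbb F^R_H=\{S\in\mathbb F_H\mid\text{there is an }H\text{-equivariant embedding }S\hookrightarrow R\}$. *)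

theory Defs
  imports "HOL-Analysis.Analysis" "HOL-Algebra.Group"
begin

(* A finite H-set: a finite carrier of natural numbers (any finite set is
   isomorphic to one of these) together with an action, relevant on H x carrier. *)
type_synonym 'g hset = "nat set \<times> ('g \<Rightarrow> nat \<Rightarrow> nat)"

definition Hset :: "('g,'b) monoid_scheme \<Rightarrow> 'g set \<Rightarrow> 'g hset \<Rightarrow> bool" where
  "Hset G H S \<longleftrightarrow> finite (fst S)
     \<and> (\<forall>h\<in>H. \<forall>x\<in>fst S. snd S h x \<in> fst S)
     \<and> (\<forall>x\<in>fst S. snd S \<one>\<^bsub>G\<^esub> x = x)
     \<and> (\<forall>h\<in>H. \<forall>k\<in>H. \<forall>x\<in>fst S. snd S (h \<otimes>\<^bsub>G\<^esub> k) x = snd S h (snd S k x))"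

definition Hiso :: "'g set \<Rightarrow> 'g hset \<Rightarrow> 'g hset \<Rightarrow> bool" where
  "Hiso H S T \<longleftrightarrow> (\<exists>f. bij_betw f (fst S) (fst T)
     \<and> (\<forall>h\<in>H. \<forall>x\<in>fst S. f (snd S h x) = snd T h (f x)))"

definition pt_hset :: "'g hset" where
  "pt_hset = ({0}, \<lambda>_ x. x)"

definition conj_sub :: "('g,'b) monoid_scheme \<Rightarrow> 'g \<Rightarrow> 'g set \<Rightarrow> 'g set" where
  "conj_sub G g H = (\<lambda>h. g \<otimes>\<^bsub>G\<^esub> h \<otimes>\<^bsub>G\<^esub> inv\<^bsub>G\<^esub> g) ` H"

definition conj_hset :: "('g,'b) monoid_scheme \<Rightarrow> 'g \<Rightarrow> 'g hset \<Rightarrow> 'g hset" where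
  "conj_hset G g S = (fst S, \<lambda>h x. snd S (inv\<^bsub>G\<^esub> g \<otimes>\<^bsub>G\<^esub> h \<otimes>\<^bsub>G\<^esub> g) x)"

definition stab :: "'g set \<Rightarrow> 'g hset \<Rightarrow> nat \<Rightarrow> 'g set" where
  "stab H S s = {h\<in>H. snd S h s = s}"

definition fibre :: "'g hset \<Rightarrow> (nat \<Rightarrow> nat) \<Rightarrow> nat \<Rightarrow> 'g hset" where
  "fibre X p s = ({x\<in>fst X. p x = s}, snd X)"

(* G-weak indexing systems: C H is the class of admissible H-sets, for subgroups H.
   Self-indexed coproducts are expressed via H-maps p : X -> S: X is the
   coproduct of Ind_{H_s}^H (p^-1 s) over orbit representatives s of S. *)
definition weak_indexing :: "('g,'b) monoid_scheme \<Rightarrow> ('g set \<Rightarrow> 'g hset set) \<Rightarrow> bool" where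
  "weak_indexing G C \<longleftrightarrow>
     (\<forall>H S. S \<in> C H \<longrightarrow> subgroup H G \<and> Hset G H S)
   \<and> (\<forall>H S T. S \<in> C H \<longrightarrow> Hset G H T \<longrightarrow> Hiso H S T \<longrightarrow> T \<in> C H)
   \<and> (\<forall>H K S. S \<in> C H \<longrightarrow> subgroup K G \<longrightarrow> K \<subseteq> H \<longrightarrow> S \<in> C K)
   \<and> (\<forall>H S g. S \<in> C H \<longrightarrow> g \<in> carrier G \<longrightarrow> conj_hset G g S \<in> C (conj_sub G g H))
   \<and> (\<forall>H. C H \<noteq> {} \<longrightarrow> pt_hset \<in> C H)
   \<and> (\<forall>H S X p. S \<in> C H \<longrightarrow> Hset G H X
        \<longrightarrow> (\<forall>x\<in>fst X. p x \<in> fst S)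
        \<longrightarrow> (\<forall>h\<in>H. \<forall>x\<in>fst X. p (snd X h x) = snd S h (p x))
        \<longrightarrow> (\<forall>s\<in>fst S. fibre X p s \<in> C (stab H S s))
        \<longrightarrow> X \<in> C H)"

definition wis_le :: "('g set \<Rightarrow> 'g hset set) \<Rightarrow> ('g set \<Rightarrow> 'g hset set) \<Rightarrow> bool" where
  "wis_le C D \<longleftrightarrow> (\<forall>H. C H \<subseteq> D H)"

definition is_wis_join :: "('g,'b) monoid_scheme \<Rightarrow> ('g set \<Rightarrow> 'g hset set)
     \<Rightarrow> ('g set \<Rightarrow> 'g hset set) \<Rightarrow> ('g set \<Rightarrow> 'g hset set) \<Rightarrow> bool" where
  "is_wis_join G A B J \<longleftrightarrow> weak_indexing G J \<and> wis_le A J \<and> wis_le B J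
     \<and> (\<forall>D. weak_indexing G D \<and> wis_le A D \<and> wis_le B D \<longrightarrow> wis_le J D)"

definition orth_rep :: "('g,'b) monoid_scheme \<Rightarrow> ('g \<Rightarrow> 'v::euclidean_space \<Rightarrow> 'v) \<Rightarrow> bool" where
  "orth_rep G \<rho> \<longleftrightarrow> (\<forall>g\<in>carrier G. orthogonal_transformation (\<rho> g))
     \<and> \<rho> \<one>\<^bsub>G\<^esub> = id
     \<and> (\<forall>g\<in>carrier G. \<forall>h\<in>carrier G. \<rho> (g \<otimes>\<^bsub>G\<^esub> h) = \<rho> g \<circ> \<rho> h)"

definition rep_sum :: "('g \<Rightarrow> 'v \<Rightarrow> 'v) \<Rightarrow> ('g \<Rightarrow> 'w \<Rightarrow> 'w) \<Rightarrow> 'g \<Rightarrow> 'v \<times> 'w \<Rightarrow> 'v \<times> 'w" where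
  "rep_sum \<rho> \<sigma> g = (\<lambda>(x, y). (\<rho> g x, \<sigma> g y))"

definition F_rep :: "('g,'b) monoid_scheme \<Rightarrow> ('g \<Rightarrow> 'v \<Rightarrow> 'v) \<Rightarrow> 'g set \<Rightarrow> 'g hset set" where
  "F_rep G \<rho> H = {S. subgroup H G \<and> Hset G H S
     \<and> (\<exists>f. inj_on f (fst S) \<and> (\<forall>h\<in>H. \<forall>x\<in>fst S. f (snd S h x) = \<rho> h (f x)))}"

end

theory Submission imports Defs begin

definition lrep :: "('g,'b) monoid_scheme \<Rightarrow> ('g \<Rightarrow> 'v::real_vector \<Rightarrow> 'v) \<Rightarrow> bool" where
  "lrep G \<rho> \<longleftrightarrow> (\<forall>g\<in>carrier G. linear (\<rho> g) \<and> inj (\<rho> g))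
     \<and> (\<forall>g\<in>carrier G. \<forall>h\<in>carrier G. \<rho> (g \<otimes>\<^bsub>G\<^esub> h) = \<rho> g \<circ> \<rho> h)"

lemma orth_lrep: "orth_rep G \<rho> \<Longrightarrow> lrep G \<rho>"
  unfolding orth_rep_def lrep_def
  by (simp add: orthogonal_transformation_inj orthogonal_transformation_linear)

lemma sum_lrep: assumes "lrep G \<rho>" "lrep G \<sigma>" shows "lrep G (rep_sum \<rho> \<sigma>)"
proof -
  have "linear (rep_sum \<rho> \<sigma> g) \<and> inj (rep_sum \<rho> \<sigma> g)" if g: "g \<in> carrier G" for g
  proof
    have l1: "linear (\<rho> g)" and l2: "linear (\<sigma> g)" and i1: "inj (\<rho> g)" and i2: "inj (\<sigma> g)"
      using assms g unfolding lrep_def by auto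
    have e: "rep_sum \<rho> \<sigma> g = (\<lambda>z. (\<rho> g (fst z), \<sigma> g (snd z)))"
      unfolding rep_sum_def by (auto simp: case_prod_beta)
    show "linear (rep_sum \<rho> \<sigma> g)" unfolding e
      by (rule linearI) (auto simp: linear_add[OF l1] linear_add[OF l2] linear_scale[OF l1] linear_scale[OF l2])
    show "inj (rep_sum \<rho> \<sigma> g)" unfolding e using i1 i2
      by (auto simp: inj_def)
  qed
  moreover have "rep_sum \<rho> \<sigma> (g \<otimes>\<^bsub>G\<^esub> h) = rep_sum \<rho> \<sigma> g \<circ> rep_sum \<rho> \<sigma> h"
    if "g \<in> carrier G" "h \<in> carrier G" for g h
    using assms that unfolding lrep_def rep_sum_def by (auto simp: fun_eq_iff)
  ultimately show ?thesis unfolding lrep_def by blast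
qed

context group begin

lemma hset_closed: "Hset G H S \<Longrightarrow> h \<in> H \<Longrightarrow> x \<in> fst S \<Longrightarrow> snd S h x \<in> fst S"
  unfolding Hset_def by blast
lemma hset_one: "Hset G H S \<Longrightarrow> x \<in> fst S \<Longrightarrow> snd S \<one> x = x"
  unfolding Hset_def by blast
lemma hset_mult: "Hset G H S \<Longrightarrow> h \<in> H \<Longrightarrow> k \<in> H \<Longrightarrow> x \<in> fst S \<Longrightarrow> snd S (h \<otimes> k) x = snd S h (snd S k x)"
  unfolding Hset_def by blast

lemma hset_inv1: assumes "subgroup H G" "Hset G H S" "h \<in> H" "x \<in> fst S"
  shows "snd S (inv h) (snd S h x) = x"
proof -
  have hG: "h \<in> carrier G" using subgroup.mem_carrier[OF assms(1,3)] .
  have "inv h \<in> H" using subgroup.m_inv_closed[OF assms(1,3)] .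
  hence "snd S (inv h) (snd S h x) = snd S (inv h \<otimes> h) x" using hset_mult[OF assms(2) _ assms(3,4)] by simp
  also have "inv h \<otimes> h = \<one>" using hG by simp
  finally show ?thesis using hset_one[OF assms(2,4)] by simp
qed

lemma hset_inv2: assumes "subgroup H G" "Hset G H S" "h \<in> H" "x \<in> fst S"
  shows "snd S h (snd S (inv h) x) = x"
proof -
  have hG: "h \<in> carrier G" using subgroup.mem_carrier[OF assms(1,3)] .
  have "inv h \<in> H" using subgroup.m_inv_closed[OF assms(1,3)] .
  hence "snd S h (snd S (inv h) x) = snd S (h \<otimes> inv h) x" using hset_mult[OF assms(2) assms(3) _ assms(4)] by simp
  also have "h \<otimes> inv h = \<one>" using hG by simp
  finally show ?thesis using hset_one[OF assms(2,4)] by simp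
qed

lemma inv_cancel_l [simp]: "x \<in> carrier G \<Longrightarrow> z \<in> carrier G \<Longrightarrow> inv x \<otimes> (x \<otimes> z) = z"
  by (simp add: m_assoc[symmetric])
lemma inv_cancel_l2 [simp]: "x \<in> carrier G \<Longrightarrow> z \<in> carrier G \<Longrightarrow> x \<otimes> (inv x \<otimes> z) = z"
  by (simp add: m_assoc[symmetric])

lemma stab_subgroup: assumes "subgroup H G" "Hset G H S" "s \<in> fst S"
  shows "subgroup (stab H S s) G"
proof (rule subgroupI)
  have HG: "H \<subseteq> carrier G" using subgroup.subset[OF assms(1)] .
  show "stab H S s \<subseteq> carrier G" using HG unfolding stab_def by auto
  have "\<one> \<in> H" using subgroup.one_closed[OF assms(1)] .
  hence "\<one> \<in> stab H S s" using hset_one[OF assms(2,3)] unfolding stab_def by simp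
  thus "stab H S s \<noteq> {}" by auto
  fix a assume a: "a \<in> stab H S s"
  hence aH: "a \<in> H" and as: "snd S a s = s" unfolding stab_def by auto
  have "inv a \<in> H" using subgroup.m_inv_closed[OF assms(1) aH] .
  moreover have "snd S (inv a) s = s" using hset_inv1[OF assms(1,2) aH assms(3)] as by simp
  ultimately show "inv a \<in> stab H S s" unfolding stab_def by simp
next
  fix a b assume a: "a \<in> stab H S s" and b: "b \<in> stab H S s"
  hence aH: "a \<in> H" and as: "snd S a s = s" and bH: "b \<in> H" and bs: "snd S b s = s"
    unfolding stab_def by auto
  have "a \<otimes> b \<in> H" using subgroup.m_closed[OF assms(1) aH bH] .
  moreover have "snd S (a \<otimes> b) s = s" using hset_mult[OF assms(2) aH bH assms(3)] as bs by simp
  ultimately show "a \<otimes> b \<in> stab H S s" unfolding stab_def by simp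
qed

lemma conj_subgroup: assumes "subgroup H G" "g \<in> carrier G"
  shows "subgroup (conj_sub G g H) G"
proof (rule subgroupI)
  have HG: "H \<subseteq> carrier G" using subgroup.subset[OF assms(1)] .
  show "conj_sub G g H \<subseteq> carrier G" using HG assms(2) unfolding conj_sub_def by auto
  have "\<one> \<in> H" using subgroup.one_closed[OF assms(1)] .
  thus "conj_sub G g H \<noteq> {}" unfolding conj_sub_def by auto
  fix a assume "a \<in> conj_sub G g H"
  then obtain h where h: "h \<in> H" "a = g \<otimes> h \<otimes> inv g" unfolding conj_sub_def by auto
  have hG: "h \<in> carrier G" using h HG by auto
  have "inv a = g \<otimes> inv h \<otimes> inv g" using h hG assms(2)
    by (simp add: inv_mult_group m_assoc)
  moreover have "inv h \<in> H" using subgroup.m_inv_closed[OF assms(1) h(1)] .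
  ultimately show "inv a \<in> conj_sub G g H" unfolding conj_sub_def by auto
next
  have HG: "H \<subseteq> carrier G" using subgroup.subset[OF assms(1)] .
  fix a b assume "a \<in> conj_sub G g H" "b \<in> conj_sub G g H"
  then obtain h k where h: "h \<in> H" "a = g \<otimes> h \<otimes> inv g" and k: "k \<in> H" "b = g \<otimes> k \<otimes> inv g"
    unfolding conj_sub_def by auto
  have hG: "h \<in> carrier G" "k \<in> carrier G" using h k HG by auto
  have "a \<otimes> b = g \<otimes> (h \<otimes> k) \<otimes> inv g" using h k hG assms(2)
    by (simp add: m_assoc)
  moreover have "h \<otimes> k \<in> H" using subgroup.m_closed[OF assms(1) h(1) k(1)] .
  ultimately show "a \<otimes> b \<in> conj_sub G g H" unfolding conj_sub_def by auto
qed

lemma lrepD: assumes "lrep G \<rho>" "g \<in> carrier G"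
  shows "linear (\<rho> g)" "inj (\<rho> g)"
  using assms unfolding lrep_def by auto

lemma lrep_mult: assumes "lrep G \<rho>" "g \<in> carrier G" "h \<in> carrier G"
  shows "\<rho> (g \<otimes> h) v = \<rho> g (\<rho> h v)"
  using assms unfolding lrep_def by auto

lemma conj_back: "h \<in> carrier G \<Longrightarrow> g \<in> carrier G \<Longrightarrow> inv g \<otimes> (g \<otimes> h \<otimes> inv g) \<otimes> g = h"
  by (simp add: m_assoc)
lemma conj_swap: "h \<in> carrier G \<Longrightarrow> g \<in> carrier G \<Longrightarrow> (g \<otimes> h \<otimes> inv g) \<otimes> g = g \<otimes> h"
  by (simp add: m_assoc)

lemma F_rep_conj: assumes L: "lrep G \<rho>" and S: "S \<in> F_rep G \<rho> H" and g: "g \<in> carrier G"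
  shows "conj_hset G g S \<in> F_rep G \<rho> (conj_sub G g H)"
proof -
  have sub: "subgroup H G" and HS: "Hset G H S"
    and "\<exists>f. inj_on f (fst S) \<and> (\<forall>h\<in>H. \<forall>x\<in>fst S. f (snd S h x) = \<rho> h (f x))"
    using S unfolding F_rep_def by auto
  then obtain f where fi: "inj_on f (fst S)" and fe: "\<And>h x. h\<in>H \<Longrightarrow> x\<in>fst S \<Longrightarrow> f (snd S h x) = \<rho> h (f x)"
    by blast
  have HG: "H \<subseteq> carrier G" using subgroup.subset[OF sub] .
  have sub': "subgroup (conj_sub G g H) G" using conj_subgroup[OF sub g] .
  have memc: "\<exists>h\<in>H. h' = g \<otimes> h \<otimes> inv g" if "h' \<in> conj_sub G g H" for h'
    using that unfolding conj_sub_def by auto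
  have act: "snd (conj_hset G g S) (g \<otimes> h \<otimes> inv g) x = snd S h x" if "h \<in> H" for h x
    using that HG g conj_back unfolding conj_hset_def by auto
  have Hs: "Hset G (conj_sub G g H) (conj_hset G g S)"
    unfolding Hset_def
  proof (intro conjI ballI)
    show "finite (fst (conj_hset G g S))" using HS unfolding Hset_def conj_hset_def by simp
  next
    fix h' x assume h': "h' \<in> conj_sub G g H" and x: "x \<in> fst (conj_hset G g S)"
    obtain h where h: "h \<in> H" "h' = g \<otimes> h \<otimes> inv g" using memc[OF h'] by blast
    show "snd (conj_hset G g S) h' x \<in> fst (conj_hset G g S)"
      using act[OF h(1)] h x hset_closed[OF HS h(1)] unfolding conj_hset_def by auto
  next
    fix x assume x: "x \<in> fst (conj_hset G g S)"
    have "inv g \<otimes> \<one> \<otimes> g = \<one>" using g by simp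
    thus "snd (conj_hset G g S) \<one> x = x" using x hset_one[OF HS] unfolding conj_hset_def by simp
  next
    fix h' k' x assume h': "h' \<in> conj_sub G g H" and k': "k' \<in> conj_sub G g H" and x: "x \<in> fst (conj_hset G g S)"
    obtain h where h: "h \<in> H" "h' = g \<otimes> h \<otimes> inv g" using memc[OF h'] by blast
    obtain k where k: "k \<in> H" "k' = g \<otimes> k \<otimes> inv g" using memc[OF k'] by blast
    have hG: "h \<in> carrier G" "k \<in> carrier G" using h k HG by auto
    have e: "h' \<otimes> k' = g \<otimes> (h \<otimes> k) \<otimes> inv g" using h k hG g by (simp add: m_assoc)
    have hk: "h \<otimes> k \<in> H" using subgroup.m_closed[OF sub h(1) k(1)] .
    have xS: "x \<in> fst S" using x unfolding conj_hset_def by simp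
    show "snd (conj_hset G g S) (h' \<otimes> k') x = snd (conj_hset G g S) h' (snd (conj_hset G g S) k' x)"
      using e act[OF hk] act[OF h(1)] act[OF k(1)] hset_mult[OF HS h(1) k(1) xS] h(2) k(2) by simp
  qed
  have "inj_on (\<lambda>x. \<rho> g (f x)) (fst (conj_hset G g S))"
    using fi lrepD(2)[OF L g] unfolding conj_hset_def inj_on_def inj_def by auto
  moreover have "\<forall>h'\<in>conj_sub G g H. \<forall>x\<in>fst (conj_hset G g S).
      \<rho> g (f (snd (conj_hset G g S) h' x)) = \<rho> h' (\<rho> g (f x))"
  proof (intro ballI)
    fix h' x assume h': "h' \<in> conj_sub G g H" and x: "x \<in> fst (conj_hset G g S)"
    obtain h where h: "h \<in> H" "h' = g \<otimes> h \<otimes> inv g" using memc[OF h'] by blast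
    have hG: "h \<in> carrier G" using h HG by auto
    have h'G: "h' \<in> carrier G" using h hG g by simp
    have xS: "x \<in> fst S" using x unfolding conj_hset_def by simp
    have "\<rho> h' (\<rho> g (f x)) = \<rho> (h' \<otimes> g) (f x)" using lrep_mult[OF L h'G g] by simp
    also have "h' \<otimes> g = g \<otimes> h" using conj_swap[OF hG g] h(2) by simp
    also have "\<rho> (g \<otimes> h) (f x) = \<rho> g (\<rho> h (f x))" using lrep_mult[OF L g hG] .
    finally show "\<rho> g (f (snd (conj_hset G g S) h' x)) = \<rho> h' (\<rho> g (f x))"
      using act[OF h(1)] h(2) fe[OF h(1) xS] by simp
  qed
  ultimately show ?thesis using sub' Hs unfolding F_rep_def by blast
qed

lemma F_rep_coprod:
  fixes \<rho> :: "'a \<Rightarrow> 'v::real_vector \<Rightarrow> 'v"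
  assumes L: "lrep G \<rho>" and S: "S \<in> F_rep G \<rho> H" and HX: "Hset G H X"
    and pm: "\<forall>x\<in>fst X. p x \<in> fst S"
    and peq: "\<forall>h\<in>H. \<forall>x\<in>fst X. p (snd X h x) = snd S h (p x)"
    and fib: "\<forall>s\<in>fst S. fibre X p s \<in> F_rep G \<rho> (stab H S s)"
  shows "X \<in> F_rep G \<rho> H"
proof -
  have sub: "subgroup H G" and HS: "Hset G H S"
    and "\<exists>f. inj_on f (fst S) \<and> (\<forall>h\<in>H. \<forall>x\<in>fst S. f (snd S h x) = \<rho> h (f x))"
    using S unfolding F_rep_def by auto
  then obtain f where fi: "inj_on f (fst S)" and fe: "\<And>h x. h\<in>H \<Longrightarrow> x\<in>fst S \<Longrightarrow> f (snd S h x) = \<rho> h (f x)"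
    by blast
  have HG: "H \<subseteq> carrier G" using subgroup.subset[OF sub] .
  have "\<forall>s\<in>fst S. \<exists>gs. inj_on gs {x\<in>fst X. p x = s} \<and>
      (\<forall>h\<in>stab H S s. \<forall>x\<in>{x\<in>fst X. p x = s}. gs (snd X h x) = \<rho> h (gs x))"
    using fib unfolding F_rep_def fibre_def by auto
  from bchoice[OF this] obtain g where gP: "\<forall>s\<in>fst S. inj_on (g s) {x\<in>fst X. p x = s} \<and>
      (\<forall>h\<in>stab H S s. \<forall>x\<in>{x\<in>fst X. p x = s}. g s (snd X h x) = \<rho> h (g s x))" by blast
  have gi: "\<And>s. s \<in> fst S \<Longrightarrow> inj_on (g s) {x\<in>fst X. p x = s}" using gP by blast
  have ge: "\<And>s h x. s \<in> fst S \<Longrightarrow> h \<in> stab H S s \<Longrightarrow> x \<in> fst X \<Longrightarrow> p x = s \<Longrightarrow> g s (snd X h x) = \<rho> h (g s x)"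
    using gP by simp
  define r where "r s = (LEAST t. t \<in> fst S \<and> (\<exists>k\<in>H. snd S k t = s))" for s
  have r1: "r s \<in> fst S \<and> (\<exists>k\<in>H. snd S k (r s) = s)" if s: "s \<in> fst S" for s
  proof -
    have "\<one> \<in> H" using subgroup.one_closed[OF sub] .
    hence "s \<in> fst S \<and> (\<exists>k\<in>H. snd S k s = s)" using s hset_one[OF HS s] by auto
    thus ?thesis unfolding r_def by (rule LeastI)
  qed
  have r2: "r (snd S h s) = r s" if s: "s \<in> fst S" and h: "h \<in> H" for s h
  proof -
    have ih: "inv h \<in> H" using subgroup.m_inv_closed[OF sub h] .
    have "(t \<in> fst S \<and> (\<exists>k\<in>H. snd S k t = snd S h s)) = (t \<in> fst S \<and> (\<exists>k\<in>H. snd S k t = s))" for t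
    proof
      assume "t \<in> fst S \<and> (\<exists>k\<in>H. snd S k t = snd S h s)"
      then obtain k where t: "t \<in> fst S" and k: "k \<in> H" "snd S k t = snd S h s" by blast
      have "snd S (inv h \<otimes> k) t = snd S (inv h) (snd S k t)" using hset_mult[OF HS ih k(1) t] .
      also have "\<dots> = s" using k(2) hset_inv1[OF sub HS h s] by simp
      finally show "t \<in> fst S \<and> (\<exists>k\<in>H. snd S k t = s)"
        using t subgroup.m_closed[OF sub ih k(1)] by blast
    next
      assume "t \<in> fst S \<and> (\<exists>k\<in>H. snd S k t = s)"
      then obtain k where t: "t \<in> fst S" and k: "k \<in> H" "snd S k t = s" by blast
      have "snd S (h \<otimes> k) t = snd S h s" using hset_mult[OF HS h k(1) t] k(2) by simp
      thus "t \<in> fst S \<and> (\<exists>k\<in>H. snd S k t = snd S h s)"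
        using t subgroup.m_closed[OF sub h k(1)] by blast
    qed
    thus ?thesis unfolding r_def by simp
  qed
  define kk where "kk s = (SOME k. k \<in> H \<and> snd S k (r s) = s)" for s
  have k1: "kk s \<in> H \<and> snd S (kk s) (r s) = s" if s: "s \<in> fst S" for s
  proof -
    have "\<exists>k. k \<in> H \<and> snd S k (r s) = s" using r1[OF s] by blast
    thus ?thesis unfolding kk_def by (rule someI_ex)
  qed
  define y where "y x = snd X (inv (kk (p x))) x" for x
  have y1: "y x \<in> fst X \<and> p (y x) = r (p x)" if x: "x \<in> fst X" for x
  proof -
    have s: "p x \<in> fst S" using pm x by blast
    have k: "kk (p x) \<in> H" and kr: "snd S (kk (p x)) (r (p x)) = p x" using k1[OF s] by auto
    have ik: "inv (kk (p x)) \<in> H" using subgroup.m_inv_closed[OF sub k] .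
    have "y x \<in> fst X" unfolding y_def using hset_closed[OF HX ik x] .
    moreover have "p (y x) = snd S (inv (kk (p x))) (p x)" unfolding y_def using peq ik x by blast
    moreover have "snd S (inv (kk (p x))) (p x) = r (p x)"
      using hset_inv1[OF sub HS k conjunct1[OF r1[OF s]]] kr by simp
    ultimately show ?thesis by simp
  qed
  define Gm where "Gm x = \<rho> (kk (p x)) (g (r (p x)) (y x))" for x
  define B where "B = {0} \<union> (\<Union>xz\<in>{xz. fst xz \<in> fst X \<and> snd xz \<in> fst X \<and> p (fst xz) \<noteq> p (snd xz)}.
      {c. f (p (fst xz)) + c *\<^sub>R Gm (fst xz) = f (p (snd xz)) + c *\<^sub>R Gm (snd xz)})"
  have fX: "finite (fst X)" using HX unfolding Hset_def by blast
  have onec: "c1 = c2" if x: "x \<in> fst X" and z: "z \<in> fst X" and pxz: "p x \<noteq> p z"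
    and e1: "f (p x) + c1 *\<^sub>R Gm x = f (p z) + c1 *\<^sub>R Gm z"
    and e2: "f (p x) + c2 *\<^sub>R Gm x = f (p z) + c2 *\<^sub>R Gm z" for x z c1 c2
  proof (rule ccontr)
    assume ne: "c1 \<noteq> c2"
    have "(f (p x) + c1 *\<^sub>R Gm x) - (f (p x) + c2 *\<^sub>R Gm x) = (f (p z) + c1 *\<^sub>R Gm z) - (f (p z) + c2 *\<^sub>R Gm z)"
      using e1 e2 by simp
    hence "(c1 - c2) *\<^sub>R Gm x = (c1 - c2) *\<^sub>R Gm z" by (simp add: algebra_simps)
    hence "Gm x = Gm z" using ne by simp
    hence "f (p x) = f (p z)" using e1 by simp
    thus False using fi pxz pm x z unfolding inj_on_def by blast
  qed
  have "finite B"
  proof -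
    have fin1: "finite {xz. fst xz \<in> fst X \<and> snd xz \<in> fst X \<and> p (fst xz) \<noteq> p (snd xz)}"
      by (rule finite_subset[of _ "fst X \<times> fst X"]) (use fX in auto)
    have "finite {c. f (p (fst xz)) + c *\<^sub>R Gm (fst xz) = f (p (snd xz)) + c *\<^sub>R Gm (snd xz)}"
      if "xz \<in> {xz. fst xz \<in> fst X \<and> snd xz \<in> fst X \<and> p (fst xz) \<noteq> p (snd xz)}" for xz
    proof (cases "{c. f (p (fst xz)) + c *\<^sub>R Gm (fst xz) = f (p (snd xz)) + c *\<^sub>R Gm (snd xz)} = {}")
      case False
      then obtain c0 where c0: "c0 \<in> {c. f (p (fst xz)) + c *\<^sub>R Gm (fst xz) = f (p (snd xz)) + c *\<^sub>R Gm (snd xz)}"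
        by blast
      have "{c. f (p (fst xz)) + c *\<^sub>R Gm (fst xz) = f (p (snd xz)) + c *\<^sub>R Gm (snd xz)} \<subseteq> {c0}"
        using onec[of "fst xz" "snd xz"] that c0 by auto
      thus ?thesis using finite_subset by blast
    qed simp
    thus ?thesis unfolding B_def using fin1 by blast
  qed
  then obtain \<epsilon> :: real where eB: "\<epsilon> \<notin> B"
    using ex_new_if_finite[OF infinite_UNIV_char_0] by blast
  define e where "e x = f (p x) + \<epsilon> *\<^sub>R Gm x" for x
  have inj: "inj_on e (fst X)"
  proof (rule inj_onI)
    fix x z assume x: "x \<in> fst X" and z: "z \<in> fst X" and exz: "e x = e z"
    show "x = z"
    proof (cases "p x = p z")
      case False
      hence "\<epsilon> \<in> B" unfolding B_def using x z exz e_def by auto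
      thus ?thesis using eB by blast
    next
      case True
      have e0: "\<epsilon> \<noteq> 0" using eB unfolding B_def by blast
      have "Gm x = Gm z" using exz True e0 unfolding e_def by simp
      hence gg: "\<rho> (kk (p x)) (g (r (p x)) (y x)) = \<rho> (kk (p x)) (g (r (p x)) (y z))"
        unfolding Gm_def using True by simp
      have s: "p x \<in> fst S" using pm x by blast
      have k: "kk (p x) \<in> H" and kr: "snd S (kk (p x)) (r (p x)) = p x" using k1[OF s] by auto
      have kG: "kk (p x) \<in> carrier G" using k HG by blast
      have "g (r (p x)) (y x) = g (r (p x)) (y z)" using gg lrepD(2)[OF L kG] unfolding inj_def by blast
      moreover have "r (p x) \<in> fst S" using r1[OF s] by blast
      ultimately have "y x = y z" using gi[of "r (p x)"] y1[OF x] y1[OF z] True x z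
        unfolding inj_on_def by auto
      hence "snd X (kk (p x)) (y x) = snd X (kk (p x)) (y z)" by simp
      thus ?thesis using hset_inv2[OF sub HX k x] hset_inv2[OF sub HX k z] True unfolding y_def by simp
    qed
  qed
  have equi: "e (snd X h x) = \<rho> h (e x)" if h: "h \<in> H" and x: "x \<in> fst X" for h x
  proof -
    define s where "s = p x"
    have s: "s \<in> fst S" using pm x s_def by blast
    define s' where "s' = p (snd X h x)"
    have s'e: "s' = snd S h s" using peq h x s_def s'_def by blast
    have s': "s' \<in> fst S" using s'e hset_closed[OF HS h s] by simp
    have rr: "r s' = r s" using r2[OF s h] s'e by simp
    define k where "k = kk s"
    define k' where "k' = kk s'"
    have k: "k \<in> H" and kr: "snd S k (r s) = s" using k1[OF s] k_def by auto
    have k': "k' \<in> H" and kr': "snd S k' (r s) = s'" using k1[OF s'] k'_def rr by auto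
    have hG: "h \<in> carrier G" and kG: "k \<in> carrier G" and k'G: "k' \<in> carrier G" using h k k' HG by auto
    have ik': "inv k' \<in> H" using subgroup.m_inv_closed[OF sub k'] .
    have ik: "inv k \<in> H" using subgroup.m_inv_closed[OF sub k] .
    define m where "m = inv k' \<otimes> h \<otimes> k"
    have ik'h: "inv k' \<otimes> h \<in> H" using subgroup.m_closed[OF sub ik' h] .
    have mH: "m \<in> H" unfolding m_def using subgroup.m_closed[OF sub ik'h k] .
    have rs: "r s \<in> fst S" using r1[OF s] by blast
    have "snd S m (r s) = snd S (inv k') (snd S h (snd S k (r s)))"
      unfolding m_def using hset_mult[OF HS ik'h k rs] hset_mult[OF HS ik' h] hset_closed[OF HS k rs] by simp
    also have "\<dots> = r s" using kr s'e kr' hset_inv1[OF sub HS k' rs] by simp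
    finally have mstab: "m \<in> stab H S (r s)" using mH unfolding stab_def by simp
    have yx: "y x \<in> fst X" "p (y x) = r s" using y1[OF x] s_def by auto
    have yhx: "y (snd X h x) = snd X (inv k') (snd X h x)" unfolding y_def k'_def s'_def by simp
    have ikx: "snd X (inv k) x \<in> fst X" using hset_closed[OF HX ik x] .
    have "snd X m (y x) = snd X (inv k' \<otimes> h) (snd X k (snd X (inv k) x))"
      unfolding m_def y_def using hset_mult[OF HX ik'h k ikx] s_def k_def by simp
    also have "\<dots> = snd X (inv k' \<otimes> h) x" using hset_inv2[OF sub HX k x] by simp
    also have "\<dots> = y (snd X h x)" using yhx hset_mult[OF HX ik' h x] by simp
    finally have ym: "y (snd X h x) = snd X m (y x)" by simp
    have gm: "g (r s) (y (snd X h x)) = \<rho> m (g (r s) (y x))"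
      using ym ge[OF rs mstab yx(1) yx(2)] by simp
    have mG: "m \<in> carrier G" using mH HG by blast
    have k'm: "k' \<otimes> m = h \<otimes> k" unfolding m_def using hG kG k'G by (simp add: m_assoc)
    have "Gm (snd X h x) = \<rho> k' (\<rho> m (g (r s) (y x)))"
      unfolding Gm_def using gm rr k'_def s'_def by simp
    also have "\<dots> = \<rho> (k' \<otimes> m) (g (r s) (y x))" using lrep_mult[OF L k'G mG] by simp
    also have "\<dots> = \<rho> h (\<rho> k (g (r s) (y x)))" using k'm lrep_mult[OF L hG kG] by simp
    also have "\<dots> = \<rho> h (Gm x)" unfolding Gm_def k_def s_def by simp
    finally have GG: "Gm (snd X h x) = \<rho> h (Gm x)" .
    have "e (snd X h x) = \<rho> h (f s) + \<epsilon> *\<^sub>R \<rho> h (Gm x)"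
      unfolding e_def using GG s'_def s'e fe[OF h s] by simp
    also have "\<dots> = \<rho> h (e x)" unfolding e_def s_def
      using linear_add[OF lrepD(1)[OF L hG]] linear_scale[OF lrepD(1)[OF L hG]] by simp
    finally show ?thesis .
  qed
  show ?thesis unfolding F_rep_def using sub HX inj equi by blast
qed

lemma F_rep_wis:
  fixes \<rho> :: "'a \<Rightarrow> 'v::real_vector \<Rightarrow> 'v"
  assumes L: "lrep G \<rho>"
  shows "weak_indexing G (F_rep G \<rho>)"
  unfolding weak_indexing_def
proof (intro conjI allI impI)
  fix H S assume "S \<in> F_rep G \<rho> H"
  thus "subgroup H G" unfolding F_rep_def by simp
next
  fix H S assume "S \<in> F_rep G \<rho> H"
  thus "Hset G H S" unfolding F_rep_def by simp
next
  fix H S T assume S: "S \<in> F_rep G \<rho> H" and HT: "Hset G H T" and iso: "Hiso H S T"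
  have sub: "subgroup H G" and HS: "Hset G H S"
    and "\<exists>f. inj_on f (fst S) \<and> (\<forall>h\<in>H. \<forall>x\<in>fst S. f (snd S h x) = \<rho> h (f x))"
    using S unfolding F_rep_def by auto
  then obtain f where fi: "inj_on f (fst S)" and fe: "\<And>h x. h\<in>H \<Longrightarrow> x\<in>fst S \<Longrightarrow> f (snd S h x) = \<rho> h (f x)"
    by blast
  obtain \<phi> where bij: "bij_betw \<phi> (fst S) (fst T)" and pe: "\<And>h x. h\<in>H \<Longrightarrow> x\<in>fst S \<Longrightarrow> \<phi> (snd S h x) = snd T h (\<phi> x)"
    using iso unfolding Hiso_def by blast
  define \<psi> where "\<psi> = inv_into (fst S) \<phi>"
  have pb: "bij_betw \<psi> (fst T) (fst S)" unfolding \<psi>_def using bij_betw_inv_into[OF bij] .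
  have "inj_on (f \<circ> \<psi>) (fst T)"
    using comp_inj_on[OF bij_betw_imp_inj_on[OF pb]] fi bij_betw_imp_surj_on[OF pb] by simp
  moreover have "(f \<circ> \<psi>) (snd T h t) = \<rho> h ((f \<circ> \<psi>) t)" if h: "h \<in> H" and t: "t \<in> fst T" for h t
  proof -
    obtain x where x: "x \<in> fst S" "t = \<phi> x" using bij t unfolding bij_betw_def by auto
    have psx: "\<psi> t = x" unfolding \<psi>_def using x bij bij_betw_inv_into_left by fastforce
    have "snd S h x \<in> fst S" using hset_closed[OF HS h x(1)] .
    hence "\<psi> (snd T h t) = snd S h x" unfolding \<psi>_def using pe[OF h x(1)] x bij bij_betw_inv_into_left by fastforce
    thus ?thesis using psx fe[OF h x(1)] by simp
  qed
  ultimately show "T \<in> F_rep G \<rho> H" unfolding F_rep_def using sub HT by blast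
next
  fix H K S assume S: "S \<in> F_rep G \<rho> H" and K: "subgroup K G" and KH: "K \<subseteq> H"
  thus "S \<in> F_rep G \<rho> K" unfolding F_rep_def Hset_def by (auto 4 4)
next
  fix H S g assume "S \<in> F_rep G \<rho> H" "g \<in> carrier G"
  thus "conj_hset G g S \<in> F_rep G \<rho> (conj_sub G g H)" using F_rep_conj[OF L] by blast
next
  fix H assume "F_rep G \<rho> H \<noteq> {}"
  hence sub: "subgroup H G" unfolding F_rep_def by auto
  have HG: "H \<subseteq> carrier G" using subgroup.subset[OF sub] .
  have "Hset G H pt_hset" unfolding Hset_def pt_hset_def by simp
  moreover have "\<rho> h 0 = 0" if "h \<in> H" for h
    using linear_0[OF lrepD(1)[OF L]] that HG by blast
  ultimately show "pt_hset \<in> F_rep G \<rho> H" unfolding F_rep_def using sub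
    by (auto intro!: exI[of _ "\<lambda>_. 0"] simp: pt_hset_def)
next
  fix H S X p assume "S \<in> F_rep G \<rho> H" "Hset G H X" "\<forall>x\<in>fst X. p x \<in> fst S"
    "\<forall>h\<in>H. \<forall>x\<in>fst X. p (snd X h x) = snd S h (p x)"
    "\<forall>s\<in>fst S. fibre X p s \<in> F_rep G \<rho> (stab H S s)"
  thus "X \<in> F_rep G \<rho> H" using F_rep_coprod[OF L] by blast
qed

lemma join_min:
  fixes \<rho> :: "'a \<Rightarrow> 'v::real_vector \<Rightarrow> 'v" and \<sigma> :: "'a \<Rightarrow> 'w::real_vector \<Rightarrow> 'w"
  assumes D: "weak_indexing G D" and D1: "wis_le (F_rep G \<rho>) D" and D2: "wis_le (F_rep G \<sigma>) D"
  shows "wis_le (F_rep G (rep_sum \<rho> \<sigma>)) D"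
  unfolding wis_le_def
proof (intro allI subsetI)
  fix H S assume S: "S \<in> F_rep G (rep_sum \<rho> \<sigma>) H"
  have D6: "\<forall>H S X p. S \<in> D H \<longrightarrow> Hset G H X
        \<longrightarrow> (\<forall>x\<in>fst X. p x \<in> fst S)
        \<longrightarrow> (\<forall>h\<in>H. \<forall>x\<in>fst X. p (snd X h x) = snd S h (p x))
        \<longrightarrow> (\<forall>s\<in>fst S. fibre X p s \<in> D (stab H S s))
        \<longrightarrow> X \<in> D H"
    using D unfolding weak_indexing_def by (elim conjE) assumption
  have sub: "subgroup H G" and HS: "Hset G H S"
    and "\<exists>f. inj_on f (fst S) \<and> (\<forall>h\<in>H. \<forall>x\<in>fst S. f (snd S h x) = rep_sum \<rho> \<sigma> h (f x))"
    using S unfolding F_rep_def by auto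
  then obtain e where ei: "inj_on e (fst S)" and ee: "\<And>h x. h\<in>H \<Longrightarrow> x\<in>fst S \<Longrightarrow> e (snd S h x) = rep_sum \<rho> \<sigma> h (e x)"
    by blast
  define e1 where "e1 x = fst (e x)" for x
  define e2 where "e2 x = snd (e x)" for x
  have ee1: "e1 (snd S h x) = \<rho> h (e1 x)" and ee2: "e2 (snd S h x) = \<sigma> h (e2 x)"
    if "h \<in> H" "x \<in> fst S" for h x
    using ee[OF that] unfolding e1_def e2_def rep_sum_def by (auto simp: case_prod_beta)
  define c where "c x = (LEAST y. y \<in> fst S \<and> e1 y = e1 x)" for x
  have c1: "c x \<in> fst S \<and> e1 (c x) = e1 x" if "x \<in> fst S" for x
    unfolding c_def by (rule LeastI[of _ x]) (use that in simp)
  have c2: "c x = c z" if "e1 x = e1 z" for x z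
    unfolding c_def using that by simp
  define S1 where "S1 = ({x \<in> fst S. c x = x}, \<lambda>h x. c (snd S h x))"
  have fS: "finite (fst S)" using HS unfolding Hset_def by blast
  have HS1: "Hset G H S1" unfolding Hset_def
  proof (intro conjI ballI)
    show "finite (fst S1)" unfolding S1_def using fS by simp
  next
    fix h x assume h: "h \<in> H" and x: "x \<in> fst S1"
    have xS: "x \<in> fst S" using x unfolding S1_def by simp
    have hx: "snd S h x \<in> fst S" using hset_closed[OF HS h xS] .
    show "snd S1 h x \<in> fst S1" unfolding S1_def using c1[OF hx] c2[of "c (snd S h x)" "snd S h x"] by simp
  next
    fix x assume x: "x \<in> fst S1"
    thus "snd S1 \<one> x = x" unfolding S1_def using hset_one[OF HS] by simp
  next
    fix h k x assume h: "h \<in> H" and k: "k \<in> H" and x: "x \<in> fst S1"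
    have xS: "x \<in> fst S" using x unfolding S1_def by simp
    have kx: "snd S k x \<in> fst S" using hset_closed[OF HS k xS] .
    have ckx: "c (snd S k x) \<in> fst S" using c1[OF kx] by blast
    have "e1 (snd S (h \<otimes> k) x) = \<rho> h (e1 (snd S k x))"
      using hset_mult[OF HS h k xS] ee1[OF h kx] by simp
    also have "\<dots> = \<rho> h (e1 (c (snd S k x)))" using c1[OF kx] by simp
    also have "\<dots> = e1 (snd S h (c (snd S k x)))" using ee1[OF h ckx] by simp
    finally have "e1 (snd S (h \<otimes> k) x) = e1 (snd S h (c (snd S k x)))" .
    from c2[OF this] show "snd S1 (h \<otimes> k) x = snd S1 h (snd S1 k x)" unfolding S1_def by simp
  qed
  have "S1 \<in> F_rep G \<rho> H" unfolding F_rep_def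
  proof (intro CollectI conjI exI[of _ e1])
    show "subgroup H G" using sub .
    show "Hset G H S1" using HS1 .
    show "inj_on e1 (fst S1)"
    proof (rule inj_onI)
      fix x z assume "x \<in> fst S1" "z \<in> fst S1" and exz: "e1 x = e1 z"
      hence cxx: "c x = x" and czz: "c z = z" unfolding S1_def by auto
      show "x = z" by (rule trans[OF sym[OF cxx] trans[OF c2[OF exz] czz]])
    qed
    show "\<forall>h\<in>H. \<forall>x\<in>fst S1. e1 (snd S1 h x) = \<rho> h (e1 x)"
    proof (intro ballI)
      fix h x assume h: "h \<in> H" and x: "x \<in> fst S1"
      have xS: "x \<in> fst S" using x unfolding S1_def by simp
      have hx: "snd S h x \<in> fst S" using hset_closed[OF HS h xS] .
      show "e1 (snd S1 h x) = \<rho> h (e1 x)" unfolding S1_def using c1[OF hx] ee1[OF h xS] by simp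
    qed
  qed
  hence S1D: "S1 \<in> D H" using D1 unfolding wis_le_def by blast
  have pm: "\<forall>x\<in>fst S. c x \<in> fst S1"
  proof
    fix x assume x: "x \<in> fst S"
    have "c (c x) = c x" using c2[of "c x" x] c1[OF x] by blast
    thus "c x \<in> fst S1" unfolding S1_def using c1[OF x] by simp
  qed
  have peq0: "c (snd S h x) = c (snd S h (c x))" if h: "h \<in> H" and x: "x \<in> fst S" for h x
  proof -
    have cx: "c x \<in> fst S" "e1 (c x) = e1 x" using c1[OF x] by auto
    show ?thesis by (rule c2) (use ee1[OF h x] ee1[OF h cx(1)] cx(2) in simp)
  qed
  have peq: "\<forall>h\<in>H. \<forall>x\<in>fst S. c (snd S h x) = snd S1 h (c x)"
  proof (intro ballI)
    fix h x assume "h \<in> H" "x \<in> fst S"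
    thus "c (snd S h x) = snd S1 h (c x)" unfolding S1_def snd_conv by (rule peq0)
  qed
  have fib: "\<forall>s\<in>fst S1. fibre S c s \<in> D (stab H S1 s)"
  proof
    fix s assume s: "s \<in> fst S1"
    have subs: "subgroup (stab H S1 s) G" using stab_subgroup[OF sub HS1 s] .
    have stH: "stab H S1 s \<subseteq> H" unfolding stab_def by auto
    have Hf: "Hset G (stab H S1 s) (fibre S c s)" unfolding Hset_def fibre_def
    proof (intro conjI ballI)
      show "finite (fst ({x \<in> fst S. c x = s}, snd S))" using fS by simp
    next
      fix h x assume h: "h \<in> stab H S1 s" and x: "x \<in> fst ({x \<in> fst S. c x = s}, snd S)"
      have hH: "h \<in> H" and hs: "c (snd S h s) = s" using h unfolding stab_def S1_def by auto
      have xS: "x \<in> fst S" and cx: "c x = s" using x by auto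
      show "snd ({x \<in> fst S. c x = s}, snd S) h x \<in> fst ({x \<in> fst S. c x = s}, snd S)"
        using hset_closed[OF HS hH xS] peq0[OF hH xS] cx hs by simp
    next
      fix x assume x: "x \<in> fst ({x \<in> fst S. c x = s}, snd S)"
      thus "snd ({x \<in> fst S. c x = s}, snd S) \<one> x = x" using hset_one[OF HS] by simp
    next
      fix h k x assume "h \<in> stab H S1 s" "k \<in> stab H S1 s" and x: "x \<in> fst ({x \<in> fst S. c x = s}, snd S)"
      hence "h \<in> H" "k \<in> H" using stH by auto
      thus "snd ({x \<in> fst S. c x = s}, snd S) (h \<otimes> k) x =
          snd ({x \<in> fst S. c x = s}, snd S) h (snd ({x \<in> fst S. c x = s}, snd S) k x)"
        using hset_mult[OF HS] x by simp
    qed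
    have "fibre S c s \<in> F_rep G \<sigma> (stab H S1 s)" unfolding F_rep_def
    proof (intro CollectI conjI exI[of _ e2])
      show "subgroup (stab H S1 s) G" using subs .
      show "Hset G (stab H S1 s) (fibre S c s)" using Hf .
      show "inj_on e2 (fst (fibre S c s))"
      proof (rule inj_onI)
        fix x z assume x: "x \<in> fst (fibre S c s)" and z: "z \<in> fst (fibre S c s)" and exz: "e2 x = e2 z"
        have xS: "x \<in> fst S" "c x = s" and zS: "z \<in> fst S" "c z = s" using x z unfolding fibre_def by auto
        have "e1 x = e1 z" using c1[OF xS(1)] c1[OF zS(1)] xS(2) zS(2) by simp
        hence "e x = e z" using exz unfolding e1_def e2_def by (simp add: prod_eq_iff)
        thus "x = z" using ei xS(1) zS(1) unfolding inj_on_def by blast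
      qed
      show "\<forall>h\<in>stab H S1 s. \<forall>x\<in>fst (fibre S c s). e2 (snd (fibre S c s) h x) = \<sigma> h (e2 x)"
        using ee2 stH unfolding fibre_def by auto
    qed
    thus "fibre S c s \<in> D (stab H S1 s)" using D2 unfolding wis_le_def by blast
  qed
  show "S \<in> D H"
    by (rule D6[rule_format, OF S1D HS]) (use pm peq fib in blast)+
qed

end

lemma (in group) F_rep_le_sum1:
  fixes \<rho> :: "'a \<Rightarrow> 'v::real_vector \<Rightarrow> 'v" and \<sigma> :: "'a \<Rightarrow> 'w::real_vector \<Rightarrow> 'w"
  assumes L: "lrep G \<sigma>"
  shows "wis_le (F_rep G \<rho>) (F_rep G (rep_sum \<rho> \<sigma>))"
  unfolding wis_le_def
proof (intro allI subsetI)
  fix H S assume S: "S \<in> F_rep G \<rho> H"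
  have sub: "subgroup H G" and HS: "Hset G H S"
    and "\<exists>f. inj_on f (fst S) \<and> (\<forall>h\<in>H. \<forall>x\<in>fst S. f (snd S h x) = \<rho> h (f x))"
    using S unfolding F_rep_def by auto
  then obtain f where fi: "inj_on f (fst S)" and fe: "\<And>h x. h\<in>H \<Longrightarrow> x\<in>fst S \<Longrightarrow> f (snd S h x) = \<rho> h (f x)"
    by blast
  have z: "\<sigma> h 0 = 0" if "h \<in> H" for h
    using linear_0[OF lrepD(1)[OF L subgroup.mem_carrier[OF sub that]]] .
  have "inj_on (\<lambda>x. (f x, 0::'w)) (fst S)" using fi unfolding inj_on_def by simp
  moreover have "\<forall>h\<in>H. \<forall>x\<in>fst S. (f (snd S h x), 0::'w) = rep_sum \<rho> \<sigma> h (f x, 0)"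
    using fe z unfolding rep_sum_def by simp
  ultimately show "S \<in> F_rep G (rep_sum \<rho> \<sigma>) H" unfolding F_rep_def using sub HS by blast
qed

lemma (in group) F_rep_le_sum2:
  fixes \<rho> :: "'a \<Rightarrow> 'v::real_vector \<Rightarrow> 'v" and \<sigma> :: "'a \<Rightarrow> 'w::real_vector \<Rightarrow> 'w"
  assumes L: "lrep G \<rho>"
  shows "wis_le (F_rep G \<sigma>) (F_rep G (rep_sum \<rho> \<sigma>))"
  unfolding wis_le_def
proof (intro allI subsetI)
  fix H S assume S: "S \<in> F_rep G \<sigma> H"
  have sub: "subgroup H G" and HS: "Hset G H S"
    and "\<exists>f. inj_on f (fst S) \<and> (\<forall>h\<in>H. \<forall>x\<in>fst S. f (snd S h x) = \<sigma> h (f x))"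
    using S unfolding F_rep_def by auto
  then obtain f where fi: "inj_on f (fst S)" and fe: "\<And>h x. h\<in>H \<Longrightarrow> x\<in>fst S \<Longrightarrow> f (snd S h x) = \<sigma> h (f x)"
    by blast
  have z: "\<rho> h 0 = 0" if "h \<in> H" for h
    using linear_0[OF lrepD(1)[OF L subgroup.mem_carrier[OF sub that]]] .
  have "inj_on (\<lambda>x. (0::'v, f x)) (fst S)" using fi unfolding inj_on_def by simp
  moreover have "\<forall>h\<in>H. \<forall>x\<in>fst S. (0::'v, f (snd S h x)) = rep_sum \<rho> \<sigma> h (0, f x)"
    using fe z unfolding rep_sum_def by simp
  ultimately show "S \<in> F_rep G (rep_sum \<rho> \<sigma>) H" unfolding F_rep_def using sub HS by blast
qed

theorem mainTheorem11:
  fixes G :: "('g, 'b) monoid_scheme"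
    and \<rho> :: "'g \<Rightarrow> 'v::euclidean_space \<Rightarrow> 'v"
    and \<sigma> :: "'g \<Rightarrow> 'w::euclidean_space \<Rightarrow> 'w"
  assumes "group G" and "finite (carrier G)"
    and "orth_rep G \<rho>" and "orth_rep G \<sigma>"
  shows "is_wis_join G (F_rep G \<rho>) (F_rep G \<sigma>) (F_rep G (rep_sum \<rho> \<sigma>))"
proof -
  have L1: "lrep G \<rho>" using orth_lrep[OF assms(3)] .
  have L2: "lrep G \<sigma>" using orth_lrep[OF assms(4)] .
  have L3: "lrep G (rep_sum \<rho> \<sigma>)" using sum_lrep[OF L1 L2] .
  show ?thesis unfolding is_wis_join_def
    using group.F_rep_wis[OF assms(1) L3] group.F_rep_le_sum1[OF assms(1) L2]
      group.F_rep_le_sum2[OF assms(1) L1] group.join_min[OF assms(1)]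
    by blast
qed

end
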